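(* Let $\Sigma=(\mathbb{N}_0,X,U,\mathscr{U},\phi)$ be a control system as in the standing setup (in particular $\mathscr U$ is a compact metrizable space and $\phi$ is continuous), and let $Q\subset X$ be a compact control set with nonempty interior. Then the following are equivalent: (1) $Q$ is equi-invariant; (2) $Q$ is finitely equi-invariant; (3) $Q$ has bounded invariance complexity.
   Context: Standing setup: $(X,d)$ is a metric space, $U$ is a compact metric space, and $F:X\times U\to X$ is a map such that $F_u:=F(\cdot,u)$ is continuous for every $u\in U$. Let $\mathscr U=U^{\mathbb N_0}$ with the product topology. For $\omega=(\omega_0,\omega_1,\dots)\in\mathscr U$, $x\in X$, set $\phi(0,x,\omega)=x$ and $\phi(k,x,\omega)=F_{\omega_{k-1}}\circ\cdots\circ F_{\omega_0}(x)$ for $k\ge1$. It is assumed that $\phi:\mathbb N_0\times X\times\mathscr U\to X$ is continuous. Notation: $\mathbb N=\{1,2,\dots\}$; $B(x,\delta)$ is the open ball; $d(y,Q)=\inf_{q\in Q}d(y,q)$; $B_\varepsilon(Q)=\{y:d(y,Q)<\varepsilon\}$; $\phi(A,x,\omega)=\{\phi(k,x,\omega):k\in A\}$. Control set: $D\subset X$ is a control set if (i) for every $x\in D$ there is $\omega\in\mathscr U$ with $\phi(\mathbb N_0,x,\omega)\subset D$; (ii) for every $x\in D$, $D\subset\operatorname{cl}\mathcal O^+(x)$, where $\mathcal O^+(x)=\{\phi(m,x,\omega):m\in\mathbb N_0,\omega\in\mathscr U\}$; (iii) $D$ is maximal with (i) and (ii). Equi-invariance: $x\in Q$ is a finitely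 equi-invariant point of $Q$ if for every $\varepsilon>0$ there exist $\delta>0$ and a finite set $F\subset\mathscr U$ such that for every $y\in B(x,\delta)\cap Q$ there is $\omega\in F$ with $\phi(\mathbb N_0,y,\omega)\subset B_\varepsilon(Q)$; it is an equi-invariant point if this holds with $F$ a singleton. $Q$ is (finitely) equi-invariant if every point of $Q$ is a (finitely) equi-invariant point. Invariance complexity: $Q^\varepsilon_{n,\omega}=\{x\in Q:\phi(\{0,\dots,n-1\},x,\omega)\subset B_\varepsilon(Q)\}$; $F\subset\mathscr U$ is $(n,\varepsilon,Q)$-spanning if $Q=\bigcup_{\omega\in F}Q^\varepsilon_{n,\omega}$; $r_{inv}(n,\varepsilon,Q)$ is the minimal cardinality of such $F$; $Q$ has bounded invariance complexity if for every $\varepsilon>0$ there is $C$ with $r_{inv}(n,\varepsilon,Q)\le C$ for all $n\in\mathbb N$. *)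

theory Defs
  imports "HOL-Analysis.Analysis" "HOL-Library.Extended_Nat"
begin

text \<open>Control space: sequences with values in U, with the product topology
  (the standard topology on the function type nat \<Rightarrow> 'u).\<close>
definition ctrl_space :: "'u set \<Rightarrow> (nat \<Rightarrow> 'u) set" where
  "ctrl_space U = {\<omega>. \<forall>n. \<omega> n \<in> U}"

fun phi :: "('x \<Rightarrow> 'u \<Rightarrow> 'x) \<Rightarrow> nat \<Rightarrow> 'x \<Rightarrow> (nat \<Rightarrow> 'u) \<Rightarrow> 'x" where
  "phi F 0 x \<omega> = x"
| "phi F (Suc k) x \<omega> = F (phi F k x \<omega>) (\<omega> k)"

definition control_system :: "'u::metric_space set \<Rightarrow> ('x::metric_space \<Rightarrow> 'u \<Rightarrow> 'x) \<Rightarrow> bool" where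
  "control_system U F \<longleftrightarrow> compact U
     \<and> (\<forall>u\<in>U. continuous_on UNIV (\<lambda>x. F x u))
     \<and> (\<forall>k. continuous_on (UNIV \<times> ctrl_space U) (\<lambda>p. phi F k (fst p) (snd p)))"

definition pos_orbit :: "'u set \<Rightarrow> ('x \<Rightarrow> 'u \<Rightarrow> 'x) \<Rightarrow> 'x \<Rightarrow> 'x set" where
  "pos_orbit U F x = {phi F m x \<omega> | m \<omega>. \<omega> \<in> ctrl_space U}"

definition ctrl_set_props :: "'u set \<Rightarrow> ('x::topological_space \<Rightarrow> 'u \<Rightarrow> 'x) \<Rightarrow> 'x set \<Rightarrow> bool" where
  "ctrl_set_props U F D \<longleftrightarrow>
     (\<forall>x\<in>D. \<exists>\<omega>\<in>ctrl_space U. \<forall>k. phi F k x \<omega> \<in> D)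
   \<and> (\<forall>x\<in>D. D \<subseteq> closure (pos_orbit U F x))"

definition control_set :: "'u set \<Rightarrow> ('x::topological_space \<Rightarrow> 'u \<Rightarrow> 'x) \<Rightarrow> 'x set \<Rightarrow> bool" where
  "control_set U F D \<longleftrightarrow> ctrl_set_props U F D
     \<and> (\<forall>D'. D \<subseteq> D' \<and> ctrl_set_props U F D' \<longrightarrow> D' = D)"

definition fin_equi_inv_point :: "'u set \<Rightarrow> ('x::metric_space \<Rightarrow> 'u \<Rightarrow> 'x) \<Rightarrow> 'x set \<Rightarrow> 'x \<Rightarrow> bool" where
  "fin_equi_inv_point U F Q x \<longleftrightarrow> (\<forall>\<epsilon>>0. \<exists>\<delta>>0. \<exists>S. finite S \<and> S \<subseteq> ctrl_space U \<and>
     (\<forall>y\<in>ball x \<delta> \<inter> Q. \<exists>\<omega>\<in>S. \<forall>k. infdist (phi F k y \<omega>) Q < \<epsilon>))"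

definition equi_inv_point :: "'u set \<Rightarrow> ('x::metric_space \<Rightarrow> 'u \<Rightarrow> 'x) \<Rightarrow> 'x set \<Rightarrow> 'x \<Rightarrow> bool" where
  "equi_inv_point U F Q x \<longleftrightarrow> (\<forall>\<epsilon>>0. \<exists>\<delta>>0. \<exists>\<omega>\<in>ctrl_space U.
     (\<forall>y\<in>ball x \<delta> \<inter> Q. \<forall>k. infdist (phi F k y \<omega>) Q < \<epsilon>))"

definition fin_equi_invariant :: "'u set \<Rightarrow> ('x::metric_space \<Rightarrow> 'u \<Rightarrow> 'x) \<Rightarrow> 'x set \<Rightarrow> bool" where
  "fin_equi_invariant U F Q \<longleftrightarrow> (\<forall>x\<in>Q. fin_equi_inv_point U F Q x)"

definition equi_invariant :: "'u set \<Rightarrow> ('x::metric_space \<Rightarrow> 'u \<Rightarrow> 'x) \<Rightarrow> 'x set \<Rightarrow> bool" where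
  "equi_invariant U F Q \<longleftrightarrow> (\<forall>x\<in>Q. equi_inv_point U F Q x)"

definition Qset :: "('x::metric_space \<Rightarrow> 'u \<Rightarrow> 'x) \<Rightarrow> 'x set \<Rightarrow> real \<Rightarrow> nat \<Rightarrow> (nat \<Rightarrow> 'u) \<Rightarrow> 'x set" where
  "Qset F Q \<epsilon> n \<omega> = {x\<in>Q. \<forall>k<n. infdist (phi F k x \<omega>) Q < \<epsilon>}"

definition spanning :: "'u set \<Rightarrow> ('x::metric_space \<Rightarrow> 'u \<Rightarrow> 'x) \<Rightarrow> nat \<Rightarrow> real \<Rightarrow> 'x set \<Rightarrow> (nat \<Rightarrow> 'u) set \<Rightarrow> bool" where
  "spanning U F n \<epsilon> Q S \<longleftrightarrow> S \<subseteq> ctrl_space U \<and> Q = (\<Union>\<omega>\<in>S. Qset F Q \<epsilon> n \<omega>)"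

definition r_inv :: "'u set \<Rightarrow> ('x::metric_space \<Rightarrow> 'u \<Rightarrow> 'x) \<Rightarrow> nat \<Rightarrow> real \<Rightarrow> 'x set \<Rightarrow> enat" where
  "r_inv U F n \<epsilon> Q = (INF S\<in>{S. spanning U F n \<epsilon> Q S}. (if finite S then enat (card S) else \<infinity>))"

definition bounded_inv_complexity :: "'u set \<Rightarrow> ('x::metric_space \<Rightarrow> 'u \<Rightarrow> 'x) \<Rightarrow> 'x set \<Rightarrow> bool" where
  "bounded_inv_complexity U F Q \<longleftrightarrow> (\<forall>\<epsilon>>0. \<exists>C::nat. \<forall>n\<ge>1. r_inv U F n \<epsilon> Q \<le> enat C)"

end

theory Submission
  imports Defs
begin

lemma open_vimage_cont: "continuous_on UNIV f \<Longrightarrow> open B \<Longrightarrow> open (f -` B)"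
  using continuous_on_open_vimage[of UNIV f] by auto

lemma closed_vimage_cont: "continuous_on UNIV f \<Longrightarrow> closed B \<Longrightarrow> closed (f -` B)"
  using continuous_on_closed_vimage[of UNIV f] by auto

definition conc :: "nat \<Rightarrow> (nat \<Rightarrow> 'u) \<Rightarrow> (nat \<Rightarrow> 'u) \<Rightarrow> nat \<Rightarrow> 'u" where
  "conc m a b = (\<lambda>i. if i < m then a i else b (i - m))"

lemma phi_agree: "(\<forall>i<k. a i = b i) \<Longrightarrow> phi F k x a = phi F k x b"
  by (induction k) auto

lemma phi_conc1: "k \<le> m \<Longrightarrow> phi F k x (conc m a b) = phi F k x a"
  by (rule phi_agree) (auto simp: conc_def)

lemma phi_conc2: "phi F (j + m) x (conc m a b) = phi F j (phi F m x a) b"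
proof (induction j)
  case 0 then show ?case by (simp add: phi_conc1)
next
  case (Suc j) then show ?case by (simp add: conc_def)
qed

lemma conc_ctrl: "a \<in> ctrl_space U \<Longrightarrow> b \<in> ctrl_space U \<Longrightarrow> conc m a b \<in> ctrl_space U"
  by (auto simp: conc_def ctrl_space_def)

lemma phi_shift: "phi F (j + m) x w = phi F j (phi F m x w) (\<lambda>i. w (i + m))"
  by (induction j) auto

lemma phi_cont:
  assumes cs: "control_system U F" and w: "\<omega> \<in> ctrl_space U"
  shows "continuous_on UNIV (\<lambda>x. phi F k x \<omega>)"
proof (induction k)
  case 0 then show ?case by (simp add: continuous_on_id)
next
  case (Suc k)
  have "\<omega> k \<in> U" using w by (simp add: ctrl_space_def)
  then have c: "continuous_on UNIV (\<lambda>z. F z (\<omega> k))" using cs by (simp add: control_system_def)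
  show ?case using continuous_on_compose2[OF c Suc.IH] by auto
qed

lemma pos_orbit_trans:
  assumes "z \<in> pos_orbit U F w" "t \<in> pos_orbit U F z"
  shows "t \<in> pos_orbit U F w"
proof -
  obtain m1 a where a: "z = phi F m1 w a" "a \<in> ctrl_space U" using assms(1) by (auto simp: pos_orbit_def)
  obtain m2 b where b: "t = phi F m2 z b" "b \<in> ctrl_space U" using assms(2) by (auto simp: pos_orbit_def)
  have "t = phi F (m2 + m1) w (conc m1 a b)" using a b by (simp add: phi_conc2)
  then show ?thesis using conc_ctrl[OF a(2) b(2)] unfolding pos_orbit_def by blast
qed

lemma pos_orbit_closure:
  assumes cs: "control_system U F" and z: "z \<in> closure (pos_orbit U F w)"
  shows "closure (pos_orbit U F z) \<subseteq> closure (pos_orbit U F w)"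
proof -
  have "pos_orbit U F z \<subseteq> closure (pos_orbit U F w)"
  proof
    fix t assume "t \<in> pos_orbit U F z"
    then obtain m b where b: "t = phi F m z b" "b \<in> ctrl_space U" by (auto simp: pos_orbit_def)
    have c: "continuous_on UNIV (\<lambda>x. phi F m x b)" by (rule phi_cont[OF cs b(2)])
    have sub: "(\<lambda>x. phi F m x b) ` pos_orbit U F w \<subseteq> closure (pos_orbit U F w)"
    proof
      fix s assume "s \<in> (\<lambda>x. phi F m x b) ` pos_orbit U F w"
      then obtain v where v: "v \<in> pos_orbit U F w" "s = phi F m v b" by auto
      have "s \<in> pos_orbit U F v" using v b(2) unfolding pos_orbit_def by blast
      then show "s \<in> closure (pos_orbit U F w)" using pos_orbit_trans[OF v(1)] closure_subset by blast
    qed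
    have "(\<lambda>x. phi F m x b) ` closure (pos_orbit U F w) \<subseteq> closure (pos_orbit U F w)"
      by (rule image_closure_subset[OF continuous_on_subset[OF c] closed_closure sub]) auto
    then show "t \<in> closure (pos_orbit U F w)" using z b(1) by blast
  qed
  then show ?thesis by (simp add: closure_minimal)
qed

lemma segment_in_Q:
  assumes cs: "control_system U F" and Q: "control_set U F Q"
    and x: "x \<in> Q" and w: "\<omega> \<in> ctrl_space U" and T: "phi F T x \<omega> \<in> Q" and k: "k \<le> T"
  shows "phi F k x \<omega> \<in> Q"
proof -
  define D where "D = Q \<union> {phi F j x \<omega> | j. j \<le> T}"
  have props: "ctrl_set_props U F Q" using Q by (simp add: control_set_def)
  have seg_orb: "phi F T x \<omega> \<in> pos_orbit U F (phi F j x \<omega>)" if "j \<le> T" for j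
  proof -
    have "phi F T x \<omega> = phi F (T - j) (phi F j x \<omega>) (\<lambda>i. \<omega> (i + j))"
      using phi_shift[of F "T - j" j x \<omega>] that by simp
    moreover have "(\<lambda>i. \<omega> (i + j)) \<in> ctrl_space U" using w by (simp add: ctrl_space_def)
    ultimately show ?thesis unfolding pos_orbit_def by blast
  qed
  have inv: "\<exists>\<nu>\<in>ctrl_space U. \<forall>i. phi F i z \<nu> \<in> D" if zD: "z \<in> D" for z
  proof (cases "z \<in> Q")
    case True
    then obtain \<nu> where "\<nu> \<in> ctrl_space U" "\<forall>i. phi F i z \<nu> \<in> Q" using props by (auto simp: ctrl_set_props_def)
    then show ?thesis unfolding D_def by blast
  next
    case False
    then obtain j where j: "z = phi F j x \<omega>" "j \<le> T" using zD D_def by auto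
    obtain \<mu> where \<mu>: "\<mu> \<in> ctrl_space U" "\<forall>i. phi F i (phi F T x \<omega>) \<mu> \<in> Q"
      using props T by (auto simp: ctrl_set_props_def)
    define a where "a = (\<lambda>i. \<omega> (i + j))"
    have a: "a \<in> ctrl_space U" using w by (simp add: a_def ctrl_space_def)
    define \<nu> where "\<nu> = conc (T - j) a \<mu>"
    have zT: "phi F (T - j) z a = phi F T x \<omega>" using phi_shift[of F "T - j" j x \<omega>] j a_def by simp
    have "phi F i z \<nu> \<in> D" for i
    proof (cases "i \<le> T - j")
      case True
      then have "phi F i z \<nu> = phi F i z a" by (simp add: \<nu>_def phi_conc1)
      also have "\<dots> = phi F (i + j) x \<omega>" using phi_shift[of F i j x \<omega>] j a_def by simp
      finally have e: "phi F i z \<nu> = phi F (i + j) x \<omega>" .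
      have "i + j \<le> T" using True j(2) by simp
      then show ?thesis unfolding D_def e by blast
    next
      case False
      define l where "l = i - (T - j)"
      have il: "i = l + (T - j)" using False l_def by simp
      have "phi F i z \<nu> = phi F l (phi F (T - j) z a) \<mu>" unfolding il \<nu>_def by (rule phi_conc2)
      then show ?thesis using \<mu>(2) zT unfolding D_def by auto
    qed
    then show ?thesis using conc_ctrl[OF a \<mu>(1)] \<nu>_def by blast
  qed
  have QD: "Q \<subseteq> closure (pos_orbit U F z)" if zD: "z \<in> D" for z
  proof (cases "z \<in> Q")
    case True then show ?thesis using props by (auto simp: ctrl_set_props_def)
  next
    case False
    then obtain j where j: "z = phi F j x \<omega>" "j \<le> T" using zD D_def by auto
    have "phi F T x \<omega> \<in> closure (pos_orbit U F z)" using seg_orb[OF j(2)] j(1) closure_subset by blast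
    then have "closure (pos_orbit U F (phi F T x \<omega>)) \<subseteq> closure (pos_orbit U F z)"
      by (rule pos_orbit_closure[OF cs])
    moreover have "Q \<subseteq> closure (pos_orbit U F (phi F T x \<omega>))" using props T by (auto simp: ctrl_set_props_def)
    ultimately show ?thesis by blast
  qed
  have DD: "D \<subseteq> closure (pos_orbit U F z)" if zD: "z \<in> D" for z
  proof
    fix t assume tD: "t \<in> D"
    show "t \<in> closure (pos_orbit U F z)"
    proof (cases "t \<in> Q")
      case True then show ?thesis using QD[OF zD] by blast
    next
      case False
      then obtain j where j: "t = phi F j x \<omega>" using tD D_def by auto
      have "t \<in> pos_orbit U F x" using j w unfolding pos_orbit_def by blast
      moreover have "closure (pos_orbit U F x) \<subseteq> closure (pos_orbit U F z)"
        using pos_orbit_closure[OF cs] QD[OF zD] x by blast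
      ultimately show ?thesis using closure_subset by blast
    qed
  qed
  have "ctrl_set_props U F D" unfolding ctrl_set_props_def using inv DD by blast
  moreover have "Q \<subseteq> D" by (simp add: D_def)
  ultimately have DQ: "D = Q" using Q by (simp add: control_set_def)
  have "phi F k x \<omega> \<in> D" using k unfolding D_def by blast
  then show ?thesis using DQ by simp
qed

lemma closed_cover:
  assumes "finite S"
  shows "open W \<Longrightarrow> W \<noteq> {} \<Longrightarrow> W \<subseteq> (\<Union>i\<in>S. A i) \<Longrightarrow> \<forall>i\<in>S. closed (A i)
    \<Longrightarrow> \<exists>i\<in>S. \<exists>V. open V \<and> V \<noteq> {} \<and> V \<subseteq> W \<inter> A i"
  using assms
proof (induction S arbitrary: W rule: finite_induct)
  case empty then show ?case by auto
next
  case (insert a S)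
  note oW = insert.prems(1) and neW = insert.prems(2) and cov = insert.prems(3) and cl = insert.prems(4)
  show ?case
  proof (cases "W \<subseteq> A a")
    case True
    then have "open W \<and> W \<noteq> {} \<and> W \<subseteq> W \<inter> A a" using oW neW by auto
    then show ?thesis by (intro bexI[of _ a] exI[of _ W]) auto
  next
    case False
    have o2: "open (W - A a)" using oW cl by (simp add: open_Diff)
    have n2: "W - A a \<noteq> {}" using False by auto
    have c2: "W - A a \<subseteq> (\<Union>i\<in>S. A i)" using cov by auto
    have cl2: "\<forall>i\<in>S. closed (A i)" using cl by simp
    obtain i V where iV: "i \<in> S" "open V" "V \<noteq> {}" "V \<subseteq> (W - A a) \<inter> A i"
      using insert.IH[OF o2 n2 c2 cl2] by auto
    then have "open V \<and> V \<noteq> {} \<and> V \<subseteq> W \<inter> A i" by auto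
    then show ?thesis using iV(1) by (intro bexI[of _ i] exI[of _ V]) auto
  qed
qed

lemma fin_imp_equi:
  assumes cs: "control_system U F" and Q: "control_set U F Q" and int: "interior Q \<noteq> {}"
    and fin: "fin_equi_invariant U F Q"
  shows "equi_invariant U F Q"
  unfolding equi_invariant_def equi_inv_point_def
proof (intro ballI allI impI)
  fix x and \<epsilon> :: real assume x: "x \<in> Q" and \<epsilon>: "0 < \<epsilon>"
  have props: "ctrl_set_props U F Q" using Q by (simp add: control_set_def)
  obtain q where q: "q \<in> interior Q" using int by blast
  have "q \<in> Q" using q interior_subset by blast
  then have fp: "fin_equi_inv_point U F Q q" using fin by (simp add: fin_equi_invariant_def)
  have h2: "\<epsilon>/2 > 0" using \<epsilon> by simp
  have "\<forall>\<epsilon>>0. \<exists>\<delta>>0. \<exists>S. finite S \<and> S \<subseteq> ctrl_space U \<and>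
     (\<forall>y\<in>ball q \<delta> \<inter> Q. \<exists>\<omega>\<in>S. \<forall>k. infdist (phi F k y \<omega>) Q < \<epsilon>)"
    using fp by (simp only: fin_equi_inv_point_def)
  from mp[OF spec[OF this, of "\<epsilon>/2"] h2]
  obtain \<delta> S where \<delta>: "\<delta> > 0" "finite S" "S \<subseteq> ctrl_space U"
      and cov: "\<forall>y\<in>ball q \<delta> \<inter> Q. \<exists>\<omega>\<in>S. \<forall>k. infdist (phi F k y \<omega>) Q < \<epsilon>/2"
    by (elim exE conjE) blast
  define A where "A \<omega> = {y. \<forall>k. infdist (phi F k y \<omega>) Q \<le> \<epsilon>/2}" for \<omega>
  have cl: "\<forall>\<omega>\<in>S. closed (A \<omega>)"
  proof
    fix \<omega> assume "\<omega> \<in> S"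
    then have w: "\<omega> \<in> ctrl_space U" using \<delta> by blast
    have "A \<omega> = (\<Inter>k. (\<lambda>y. infdist (phi F k y \<omega>) Q) -` {..\<epsilon>/2})" by (auto simp: A_def)
    moreover have "closed ((\<lambda>y. infdist (phi F k y \<omega>) Q) -` {..\<epsilon>/2})" for k
      by (rule closed_vimage_cont[OF continuous_on_infdist[OF phi_cont[OF cs w]] closed_atMost])
    ultimately show "closed (A \<omega>)" by auto
  qed
  define W where "W = ball q \<delta> \<inter> interior Q"
  have "q \<in> W" using q \<delta>(1) by (simp add: W_def)
  then have W2: "W \<noteq> {}" by blast
  have W1: "open W" unfolding W_def by (intro open_Int open_ball open_interior)
  note W = W1 W2
  have covW: "W \<subseteq> (\<Union>\<omega>\<in>S. A \<omega>)"
  proof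
    fix y assume "y \<in> W"
    then have "y \<in> ball q \<delta> \<inter> Q" using interior_subset by (auto simp: W_def)
    then obtain \<omega> where "\<omega> \<in> S" "\<forall>k. infdist (phi F k y \<omega>) Q < \<epsilon>/2" using cov by blast
    then have "\<omega> \<in> S" "y \<in> A \<omega>" by (auto simp: A_def less_imp_le)
    then show "y \<in> (\<Union>\<omega>\<in>S. A \<omega>)" by blast
  qed
  obtain \<omega>p V where Vp: "\<omega>p \<in> S" "open V" "V \<noteq> {}" "V \<subseteq> W \<inter> A \<omega>p"
    using closed_cover[OF \<delta>(2) W covW cl] by blast
  have VQ: "V \<subseteq> Q" using Vp(4) interior_subset by (auto simp: W_def)
  have wp: "\<omega>p \<in> ctrl_space U" using Vp(1) \<delta>(3) by blast
  have "Q \<subseteq> closure (pos_orbit U F x)" using props x by (auto simp: ctrl_set_props_def)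
  then have "V \<inter> closure (pos_orbit U F x) \<noteq> {}" using VQ Vp(3) by blast
  then have "V \<inter> pos_orbit U F x \<noteq> {}" using open_Int_closure_eq_empty[OF Vp(2)] by blast
  then obtain T \<omega> where T: "phi F T x \<omega> \<in> V" "\<omega> \<in> ctrl_space U" unfolding pos_orbit_def by blast
  have seg: "phi F k x \<omega> \<in> Q" if "k \<le> T" for k
    using segment_in_Q[OF cs Q x T(2) _ that] T(1) VQ by blast
  define N where "N = (\<lambda>y. phi F T y \<omega>) -` V \<inter> (\<Inter>k\<in>{..T}. (\<lambda>y. phi F k y \<omega>) -` ball (phi F k x \<omega>) \<epsilon>)"
  have "open N" unfolding N_def
    by (intro open_Int open_INT ballI finite_atMost open_vimage_cont[OF phi_cont[OF cs T(2)]] Vp(2) open_ball)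
  moreover have "x \<in> N" using T(1) \<epsilon> by (auto simp: N_def)
  ultimately obtain d where d: "d > 0" "ball x d \<subseteq> N" by (meson openE)
  define \<omega>' where "\<omega>' = conc T \<omega> \<omega>p"
  have "\<forall>y\<in>ball x d \<inter> Q. \<forall>k. infdist (phi F k y \<omega>') Q < \<epsilon>"
  proof (intro ballI allI)
    fix y k assume y: "y \<in> ball x d \<inter> Q"
    then have yN: "y \<in> N" using d by blast
    show "infdist (phi F k y \<omega>') Q < \<epsilon>"
    proof (cases "k \<le> T")
      case True
      have "phi F k y \<omega>' = phi F k y \<omega>" using True by (simp add: \<omega>'_def phi_conc1)
      moreover have "dist (phi F k y \<omega>) (phi F k x \<omega>) < \<epsilon>" using yN True by (auto simp: N_def dist_commute)
      moreover have "infdist (phi F k y \<omega>) Q \<le> dist (phi F k y \<omega>) (phi F k x \<omega>)"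
        by (rule infdist_le[OF seg[OF True]])
      ultimately show ?thesis by simp
    next
      case False
      define l where "l = k - T"
      have kl: "k = l + T" using False l_def by simp
      have "phi F k y \<omega>' = phi F l (phi F T y \<omega>) \<omega>p" unfolding kl \<omega>'_def by (rule phi_conc2)
      moreover have "phi F T y \<omega> \<in> A \<omega>p" using yN Vp(4) by (auto simp: N_def)
      ultimately have "infdist (phi F k y \<omega>') Q \<le> \<epsilon>/2" by (simp add: A_def)
      then show ?thesis using \<epsilon> by simp
    qed
  qed
  moreover have "\<omega>' \<in> ctrl_space U" unfolding \<omega>'_def by (rule conc_ctrl[OF T(2) wp])
  ultimately show "\<exists>\<delta>>0. \<exists>\<omega>\<in>ctrl_space U. \<forall>y\<in>ball x \<delta> \<inter> Q. \<forall>k. infdist (phi F k y \<omega>) Q < \<epsilon>"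
    using d(1) by blast
qed

lemma fin_imp_bounded:
  assumes cQ: "compact Q" and fin: "fin_equi_invariant U F Q"
  shows "bounded_inv_complexity U F Q"
  unfolding bounded_inv_complexity_def
proof (intro allI impI)
  fix \<epsilon> :: real assume \<epsilon>: "\<epsilon> > 0"
  have "\<forall>x\<in>Q. \<exists>\<delta>. \<delta> > 0 \<and> (\<exists>S. finite S \<and> S \<subseteq> ctrl_space U \<and> (\<forall>y\<in>ball x \<delta> \<inter> Q. \<exists>\<omega>\<in>S. \<forall>k. infdist (phi F k y \<omega>) Q < \<epsilon>))"
  proof
    fix x assume "x \<in> Q"
    then have "fin_equi_inv_point U F Q x" using fin by (simp add: fin_equi_invariant_def)
    then show "\<exists>\<delta>. \<delta> > 0 \<and> (\<exists>S. finite S \<and> S \<subseteq> ctrl_space U \<and> (\<forall>y\<in>ball x \<delta> \<inter> Q. \<exists>\<omega>\<in>S. \<forall>k. infdist (phi F k y \<omega>) Q < \<epsilon>))"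
      using \<epsilon> unfolding fin_equi_inv_point_def by blast
  qed
  from bchoice[OF this] obtain d where d: "\<forall>x\<in>Q. d x > 0 \<and> (\<exists>S. finite S \<and> S \<subseteq> ctrl_space U \<and> (\<forall>y\<in>ball x (d x) \<inter> Q. \<exists>\<omega>\<in>S. \<forall>k. infdist (phi F k y \<omega>) Q < \<epsilon>))"
    by blast
  then have "\<forall>x\<in>Q. \<exists>S. finite S \<and> S \<subseteq> ctrl_space U \<and> (\<forall>y\<in>ball x (d x) \<inter> Q. \<exists>\<omega>\<in>S. \<forall>k. infdist (phi F k y \<omega>) Q < \<epsilon>)"
    by blast
  from bchoice[OF this] obtain S where S: "\<forall>x\<in>Q. finite (S x) \<and> S x \<subseteq> ctrl_space U \<and> (\<forall>y\<in>ball x (d x) \<inter> Q. \<exists>\<omega>\<in>S x. \<forall>k. infdist (phi F k y \<omega>) Q < \<epsilon>)"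
    by blast
  have "Q \<subseteq> (\<Union>x\<in>Q. ball x (d x))" using d by force
  then obtain Q0 where Q0: "Q0 \<subseteq> Q" "finite Q0" "Q \<subseteq> (\<Union>x\<in>Q0. ball x (d x))"
    using compactE_image[OF cQ, of Q "\<lambda>x. ball x (d x)"] by blast
  define SS where "SS = (\<Union>x\<in>Q0. S x)"
  have fin: "finite SS" using Q0 S by (auto simp: SS_def)
  have "spanning U F n \<epsilon> Q SS" for n
    unfolding spanning_def
  proof
    show "SS \<subseteq> ctrl_space U" using Q0 S by (auto simp: SS_def)
    show "Q = (\<Union>\<omega>\<in>SS. Qset F Q \<epsilon> n \<omega>)"
    proof
      show "(\<Union>\<omega>\<in>SS. Qset F Q \<epsilon> n \<omega>) \<subseteq> Q" by (auto simp: Qset_def)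
      show "Q \<subseteq> (\<Union>\<omega>\<in>SS. Qset F Q \<epsilon> n \<omega>)"
      proof
        fix y assume y: "y \<in> Q"
        then obtain x where x: "x \<in> Q0" "y \<in> ball x (d x)" using Q0 by blast
        have xQ: "x \<in> Q" using Q0(1) x(1) by blast
        have "\<forall>y\<in>ball x (d x) \<inter> Q. \<exists>\<omega>\<in>S x. \<forall>k. infdist (phi F k y \<omega>) Q < \<epsilon>" using S xQ by blast
        then obtain \<omega> where "\<omega> \<in> S x" "\<forall>k. infdist (phi F k y \<omega>) Q < \<epsilon>" using x(2) y by blast
        then show "y \<in> (\<Union>\<omega>\<in>SS. Qset F Q \<epsilon> n \<omega>)" using x y by (auto simp: SS_def Qset_def)
      qed
    qed
  qed
  then have "r_inv U F n \<epsilon> Q \<le> enat (card SS)" for n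
  proof -
    have "r_inv U F n \<epsilon> Q \<le> (if finite SS then enat (card SS) else \<infinity>)"
      unfolding r_inv_def by (rule INF_lower) (simp add: \<open>\<And>n. spanning U F n \<epsilon> Q SS\<close>)
    then show ?thesis using fin by simp
  qed
  then show "\<exists>C. \<forall>n\<ge>1. r_inv U F n \<epsilon> Q \<le> enat C" by blast
qed

lemma compact_PiE_UNIV:
  fixes K :: "'b::topological_space set"
  assumes "compact K"
  shows "compact (PiE (UNIV::'i set) (\<lambda>_. K))"
  using compactin_PiE[of "\<lambda>_. euclidean" "UNIV::'i set" "\<lambda>_. K"] assms
  by (simp add: euclidean_product_topology)

lemma ctrl_space_PiE: "ctrl_space U = PiE UNIV (\<lambda>_. U)"
  by (auto simp: ctrl_space_def PiE_UNIV_domain Pi_iff)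

lemma list_surj:
  assumes fS: "finite A" and c: "card A \<le> C" and ne0: "A \<noteq> {}"
  shows "\<exists>g. (\<forall>i. g i \<in> A) \<and> A \<subseteq> g ` {..<C}"
proof -
  obtain xs where xs: "set xs = A" "distinct xs" using finite_distinct_list[OF fS] by blast
  have "card A = length xs" using distinct_card[OF xs(2)] xs(1) by simp
  then have len: "length xs \<le> C" using c by simp
  have ne: "xs \<noteq> []" using ne0 xs(1) by auto
  define g where "g i = (if i < length xs then xs ! i else hd xs)" for i
  have "\<forall>i. g i \<in> A" using ne xs(1) by (auto simp: g_def)
  moreover have "A \<subseteq> g ` {..<C}"
  proof
    fix s assume "s \<in> A"
    then obtain i where "i < length xs" "xs ! i = s" using xs(1) by (auto simp: in_set_conv_nth)
    then show "s \<in> g ` {..<C}" using len by (force simp: g_def)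
  qed
  ultimately show ?thesis by blast
qed

lemma bounded_imp_fin:
  assumes cs: "control_system U F" and bd: "bounded_inv_complexity U F Q"
  shows "fin_equi_invariant U F Q"
  unfolding fin_equi_invariant_def fin_equi_inv_point_def
proof (intro ballI allI impI)
  fix x and \<epsilon> :: real assume x: "x \<in> Q" and \<epsilon>: "0 < \<epsilon>"
  have "\<epsilon>/2 > 0" using \<epsilon> by simp
  then obtain C :: nat where C: "\<forall>n\<ge>1. r_inv U F n (\<epsilon>/2) Q \<le> enat C"
    using bd unfolding bounded_inv_complexity_def by blast
  have ex: "\<exists>S. spanning U F (Suc n) (\<epsilon>/2) Q S \<and> finite S \<and> card S \<le> C" for n
  proof (rule ccontr)
    assume na: "\<not> ?thesis"
    have "enat (Suc C) \<le> r_inv U F (Suc n) (\<epsilon>/2) Q"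
      unfolding r_inv_def
    proof (rule INF_greatest)
      fix S assume "S \<in> {S. spanning U F (Suc n) (\<epsilon>/2) Q S}"
      then show "enat (Suc C) \<le> (if finite S then enat (card S) else \<infinity>)" using na by auto
    qed
    then have "enat C < r_inv U F (Suc n) (\<epsilon>/2) Q" by (simp add: Suc_ile_eq)
    moreover have "r_inv U F (Suc n) (\<epsilon>/2) Q \<le> enat C" using C by simp
    ultimately show False by simp
  qed
  then obtain SS where SS: "\<And>n. spanning U F (Suc n) (\<epsilon>/2) Q (SS n) \<and> finite (SS n) \<and> card (SS n) \<le> C"
    by metis
  have SSc: "SS n \<subseteq> ctrl_space U" for n using SS[of n] by (simp add: spanning_def)
  have exg: "\<exists>g. (\<forall>i. g i \<in> SS n) \<and> SS n \<subseteq> g ` {..<C}" for n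
  proof -
    have fS: "finite (SS n)" "card (SS n) \<le> C" using SS[of n] by blast+
    have eq: "Q = (\<Union>\<omega>\<in>SS n. Qset F Q (\<epsilon>/2) (Suc n) \<omega>)" using SS[of n] unfolding spanning_def by (elim conjE) assumption
    have "x \<in> (\<Union>\<omega>\<in>SS n. Qset F Q (\<epsilon>/2) (Suc n) \<omega>)" using subst[where P="\<lambda>A. x \<in> A", OF eq x] .
    then have "SS n \<noteq> {}" by blast
    then show ?thesis using list_surj[OF fS] by blast
  qed
  then obtain G where G: "\<And>n. (\<forall>i. G n i \<in> SS n) \<and> SS n \<subseteq> G n ` {..<C}" by metis
  define K where "K = PiE (UNIV::nat set) (\<lambda>_. ctrl_space U)"
  have cU: "compact U" using cs by (simp add: control_system_def)
  have cK: "compact K" unfolding K_def ctrl_space_PiE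
    by (intro compact_PiE_UNIV cU)
  have Gi: "G n i \<in> ctrl_space U" for n i using G[of n] SSc[of n] by blast
  have GK: "\<forall>n. G n \<in> K" using Gi by (auto simp: K_def PiE_UNIV_domain Pi_iff)
  obtain l r where lr: "l \<in> K" "strict_mono (r :: nat \<Rightarrow> nat)" "(G \<circ> r) \<longlonglongrightarrow> l"
    using seq_compactE[OF compact_imp_seq_compact[OF cK] GK] by blast
  have li: "l i \<in> ctrl_space U" for i using lr(1) by (simp add: K_def PiE_UNIV_domain Pi_iff)
  have conv: "(\<lambda>m. G (r m) i) \<longlonglongrightarrow> l i" for i
    using continuous_on_tendsto_compose[OF continuous_on_product_coordinates[of i] lr(3)] by (simp add: o_def)
  define S0 where "S0 = l ` {..<C}"
  have main: "\<forall>y\<in>Q. \<exists>\<omega>\<in>S0. \<forall>k. infdist (phi F k y \<omega>) Q \<le> \<epsilon>/2"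
  proof
    fix y assume y: "y \<in> Q"
    have "\<exists>i<C. y \<in> Qset F Q (\<epsilon>/2) (Suc n) (G n i)" for n
    proof -
      have eq: "Q = (\<Union>\<omega>\<in>SS n. Qset F Q (\<epsilon>/2) (Suc n) \<omega>)" using SS[of n] unfolding spanning_def by (elim conjE) assumption
      have "y \<in> (\<Union>\<omega>\<in>SS n. Qset F Q (\<epsilon>/2) (Suc n) \<omega>)" using subst[where P="\<lambda>A. y \<in> A", OF eq y] .
      then obtain \<omega> where "\<omega> \<in> SS n" "y \<in> Qset F Q (\<epsilon>/2) (Suc n) \<omega>" by blast
      then show ?thesis using G[of n] by blast
    qed
    then obtain I where I: "\<And>n. I n < C \<and> y \<in> Qset F Q (\<epsilon>/2) (Suc n) (G n (I n))" by metis
    have "\<exists>i<C. infinite {j. I (r j) = i}"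
    proof (rule ccontr)
      assume "\<not> ?thesis"
      then have "finite (\<Union>i<C. {j. I (r j) = i})" by auto
      moreover have "(\<Union>i<C. {j. I (r j) = i}) = UNIV" using I by auto
      ultimately show False by simp
    qed
    then obtain i where i: "i < C" "infinite {j. I (r j) = i}" by blast
    define s where "s = enumerate {j. I (r j) = i}"
    have smono: "strict_mono s" using i(2) by (simp add: s_def strict_mono_enumerate)
    have sJ: "I (r (s m)) = i" for m using enumerate_in_set[OF i(2)] by (simp add: s_def)
    have "\<forall>k. infdist (phi F k y (l i)) Q \<le> \<epsilon>/2"
    proof
      fix k
      have c1: "(\<lambda>m. G (r (s m)) i) \<longlonglongrightarrow> l i"
        using LIMSEQ_subseq_LIMSEQ[OF conv[of i] smono] by (simp add: o_def)
      have c1': "(\<lambda>m. (y, G (r (s m)) i)) \<longlonglongrightarrow> (y, l i)"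
        by (rule tendsto_Pair[OF tendsto_const c1])
      have cc: "continuous_on (UNIV \<times> ctrl_space U) (\<lambda>p. phi F k (fst p) (snd p))"
        using cs by (simp add: control_system_def)
      have c2: "(\<lambda>m. phi F k y (G (r (s m)) i)) \<longlonglongrightarrow> phi F k y (l i)"
        using continuous_on_tendsto_compose[OF cc c1'] li Gi by simp
      have c3: "(\<lambda>m. infdist (phi F k y (G (r (s m)) i)) Q) \<longlonglongrightarrow> infdist (phi F k y (l i)) Q"
        by (rule tendsto_infdist[OF c2])
      show "infdist (phi F k y (l i)) Q \<le> \<epsilon>/2"
      proof (rule LIMSEQ_le_const2[OF c3], intro exI allI impI)
        fix m assume km: "m \<ge> k"
        have "k < Suc (r (s m))" using km seq_suble[OF smono, of m] seq_suble[OF lr(2), of "s m"] by simp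
        then show "infdist (phi F k y (G (r (s m)) i)) Q \<le> \<epsilon>/2"
          using I[of "r (s m)"] sJ[of m] by (auto simp: Qset_def less_imp_le)
      qed
    qed
    then show "\<exists>\<omega>\<in>S0. \<forall>k. infdist (phi F k y \<omega>) Q \<le> \<epsilon>/2" using i(1) by (auto simp: S0_def)
  qed
  have "\<forall>y\<in>ball x 1 \<inter> Q. \<exists>\<omega>\<in>S0. \<forall>k. infdist (phi F k y \<omega>) Q < \<epsilon>"
  proof
    fix y assume "y \<in> ball x 1 \<inter> Q"
    then obtain \<omega> where "\<omega> \<in> S0" "\<forall>k. infdist (phi F k y \<omega>) Q \<le> \<epsilon>/2" using main by blast
    moreover have "\<epsilon>/2 < \<epsilon>" using \<epsilon> by simp
    ultimately have "\<forall>k. infdist (phi F k y \<omega>) Q < \<epsilon>" by (meson le_less_trans)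
    then show "\<exists>\<omega>\<in>S0. \<forall>k. infdist (phi F k y \<omega>) Q < \<epsilon>" using \<open>\<omega> \<in> S0\<close> by blast
  qed
  moreover have "finite S0" "S0 \<subseteq> ctrl_space U" using li by (auto simp: S0_def)
  ultimately have "finite S0 \<and> S0 \<subseteq> ctrl_space U \<and> (\<forall>y\<in>ball x 1 \<inter> Q. \<exists>\<omega>\<in>S0. \<forall>k. infdist (phi F k y \<omega>) Q < \<epsilon>)"
    by blast
  then show "\<exists>\<delta>>0. \<exists>S. finite S \<and> S \<subseteq> ctrl_space U \<and> (\<forall>y\<in>ball x \<delta> \<inter> Q. \<exists>\<omega>\<in>S. \<forall>k. infdist (phi F k y \<omega>) Q < \<epsilon>)"
    by (intro exI[of _ "1::real"] conjI exI[of _ S0]) simp_all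
qed

lemma equi_imp_fin: "equi_invariant U F Q \<Longrightarrow> fin_equi_invariant U F Q"
  unfolding equi_invariant_def equi_inv_point_def fin_equi_invariant_def fin_equi_inv_point_def
proof (intro ballI allI impI)
  fix x and \<epsilon> :: real
  assume h: "\<forall>x\<in>Q. \<forall>\<epsilon>>0. \<exists>\<delta>>0. \<exists>\<omega>\<in>ctrl_space U. \<forall>y\<in>ball x \<delta> \<inter> Q. \<forall>k. infdist (phi F k y \<omega>) Q < \<epsilon>"
    and x: "x \<in> Q" and e: "0 < \<epsilon>"
  then obtain \<delta> \<omega> where "\<delta> > 0" "\<omega> \<in> ctrl_space U" "\<forall>y\<in>ball x \<delta> \<inter> Q. \<forall>k. infdist (phi F k y \<omega>) Q < \<epsilon>"
    by blast
  then show "\<exists>\<delta>>0. \<exists>S. finite S \<and> S \<subseteq> ctrl_space U \<and> (\<forall>y\<in>ball x \<delta> \<inter> Q. \<exists>\<omega>\<in>S. \<forall>k. infdist (phi F k y \<omega>) Q < \<epsilon>)"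
    by (intro exI[of _ \<delta>] conjI exI[of _ "{\<omega>}"]) auto
qed

theorem mainTheorem4:
  fixes U :: "'u::metric_space set" and F :: "'x::metric_space \<Rightarrow> 'u \<Rightarrow> 'x" and Q :: "'x set"
  assumes "control_system U F"
    and "compact Q" and "control_set U F Q" and "interior Q \<noteq> {}"
  shows "(equi_invariant U F Q \<longleftrightarrow> fin_equi_invariant U F Q)
       \<and> (fin_equi_invariant U F Q \<longleftrightarrow> bounded_inv_complexity U F Q)"
  using equi_imp_fin[of U F Q] fin_imp_equi[OF assms(1,3,4)] fin_imp_bounded[OF assms(2)]
    bounded_imp_fin[OF assms(1)] by blast

end
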